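(* Let $p,q\in(0,1/2)$ and suppose $K_{pq}$ is a twofold Cantor set. Then the Hausdorff dimension $d=\dim_H K_{pq}$ satisfies $p^d+q^d-(pq)^d=1/2$.
   Context: For $p,q\in(0,1/2)$ let $S_1(x)=px$, $S_2(x)=qx$, $S_3(x)=px+1-p$, $S_4(x)=qx+1-q$, let $K_{pq}$ be the attractor of $\{S_1,S_2,S_3,S_4\}$ (the unique nonempty compact $K\subset\mathbb R$ with $K=\bigcup_{i=1}^4S_i(K)$), and let $A=S_3(K_{pq})\cup S_4(K_{pq})$. $K_{pq}$ is called a twofold Cantor set if $S_1^m(A)\cap S_2^n(A)=\varnothing$ for all $m,n\in\mathbb N$. *)

theory Defs
  imports "HOL-Analysis.Analysis"
begin

definition hweight :: "real \<Rightarrow> real set \<Rightarrow> real" where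
  "hweight s U = (if U = {} then 0 else if s = 0 then 1 else diameter U powr s)"

definition hausdorff_pre :: "real \<Rightarrow> real \<Rightarrow> real set \<Rightarrow> ennreal" where
  "hausdorff_pre s \<delta> E =
     (INF U \<in> {U :: nat \<Rightarrow> real set. E \<subseteq> (\<Union>i. U i) \<and>
                 (\<forall>i. bounded (U i) \<and> diameter (U i) \<le> \<delta>)}.
        (\<Sum>i. ennreal (hweight s (U i))))"

definition hausdorff_measure :: "real \<Rightarrow> real set \<Rightarrow> ennreal" where
  "hausdorff_measure s E = (SUP \<delta> \<in> {0<..}. hausdorff_pre s \<delta> E)"

definition hausdorff_dim :: "real set \<Rightarrow> real" where
  "hausdorff_dim E = Inf {s. 0 \<le> s \<and> hausdorff_measure s E = 0}"

definition S1 :: "real \<Rightarrow> real \<Rightarrow> real" where "S1 p x = p * x"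
definition S2 :: "real \<Rightarrow> real \<Rightarrow> real" where "S2 q x = q * x"
definition S3 :: "real \<Rightarrow> real \<Rightarrow> real" where "S3 p x = p * x + 1 - p"
definition S4 :: "real \<Rightarrow> real \<Rightarrow> real" where "S4 q x = q * x + 1 - q"

definition Kpq :: "real \<Rightarrow> real \<Rightarrow> real set" where
  "Kpq p q = (THE K. compact K \<and> K \<noteq> {} \<and>
      K = S1 p ` K \<union> S2 q ` K \<union> S3 p ` K \<union> S4 q ` K)"

definition Apq :: "real \<Rightarrow> real \<Rightarrow> real set" where
  "Apq p q = S3 p ` Kpq p q \<union> S4 q ` Kpq p q"

text \<open>Twofold Cantor set; here the natural numbers start at 1 (for m = 0 or n = 0
  the condition would fail trivially).\<close>
definition twofold_cantor :: "real \<Rightarrow> real \<Rightarrow> bool" where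
  "twofold_cantor p q = (\<forall>m n :: nat. m \<ge> 1 \<longrightarrow> n \<ge> 1 \<longrightarrow>
      ((S1 p ^^ m) ` Apq p q) \<inter> ((S2 q ^^ n) ` Apq p q) = {})"

end

theory Submission
  imports Defs
begin

lemma hweight_nonneg: "0 \<le> hweight s U"
  by (simp add: hweight_def)

lemma bounded_affine_image: "bounded U \<Longrightarrow> bounded ((\<lambda>x::real. a*x+b) ` U)"
proof -
  assume "bounded U"
  then obtain R where R: "\<And>x. x \<in> U \<Longrightarrow> \<bar>x\<bar> \<le> R" by (auto simp: bounded_iff)
  have "\<bar>a*x+b\<bar> \<le> \<bar>a\<bar>*R + \<bar>b\<bar>" if "x \<in> U" for x
  proof -
    have "\<bar>a*x+b\<bar> \<le> \<bar>a\<bar>*\<bar>x\<bar> + \<bar>b\<bar>" by (metis abs_mult abs_triangle_ineq)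
    also have "\<dots> \<le> \<bar>a\<bar>*R + \<bar>b\<bar>" using R[OF that] by (simp add: mult_left_mono)
    finally show ?thesis .
  qed
  then show ?thesis by (auto simp: bounded_iff)
qed

lemma diameter_affine_le:
  fixes U :: "real set"
  assumes "bounded U"
  shows "diameter ((\<lambda>x. a*x+b) ` U) \<le> \<bar>a\<bar> * diameter U"
proof (rule diameter_le)
  show "(\<lambda>x. a*x+b) ` U \<noteq> {} \<or> 0 \<le> \<bar>a\<bar> * diameter U"
    using diameter_ge_0[OF assms] by auto
  fix x y assume "x \<in> (\<lambda>x. a*x+b) ` U" "y \<in> (\<lambda>x. a*x+b) ` U"
  then obtain x' y' where xy: "x' \<in> U" "y' \<in> U" "x = a*x'+b" "y = a*y'+b" by auto
  have "norm (x - y) = \<bar>a\<bar> * \<bar>x'-y'\<bar>" using xy by (simp add: abs_mult[symmetric] algebra_simps)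
  also have "\<dots> \<le> \<bar>a\<bar> * diameter U"
    using diameter_bounded_bound[OF assms xy(1,2)] by (simp add: mult_left_mono dist_real_def)
  finally show "norm (x - y) \<le> \<bar>a\<bar> * diameter U" .
qed

lemma diameter_affine:
  fixes U :: "real set"
  assumes "bounded U" "a \<noteq> 0"
  shows "diameter ((\<lambda>x. a*x+b) ` U) = \<bar>a\<bar> * diameter U"
proof (rule antisym)
  show "diameter ((\<lambda>x. a*x+b) ` U) \<le> \<bar>a\<bar> * diameter U" by (rule diameter_affine_le[OF assms(1)])
  have "(\<lambda>x. (1/a)*x + (-b/a)) ` ((\<lambda>x. a*x+b) ` U) = U"
    unfolding image_image using assms(2) by (simp add: field_simps)
  then have "diameter U \<le> \<bar>1/a\<bar> * diameter ((\<lambda>x. a*x+b) ` U)"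
    using diameter_affine_le[OF bounded_affine_image[OF assms(1)], of "1/a" "-b/a" a b] by simp
  then show "\<bar>a\<bar> * diameter U \<le> diameter ((\<lambda>x. a*x+b) ` U)"
    using assms(2) by (simp add: field_simps)
qed

lemma hweight_affine:
  fixes U :: "real set"
  assumes "bounded U" "a \<noteq> 0" "0 < s"
  shows "hweight s ((\<lambda>x. a*x+b) ` U) = \<bar>a\<bar> powr s * hweight s U"
  using assms by (simp add: hweight_def diameter_affine powr_mult)

lemma finite_min_pos:
  assumes "finite S" "\<forall>x\<in>S. \<exists>d>0. Q x d"
    and mono: "\<And>x d d'. Q x d \<Longrightarrow> 0 < d' \<Longrightarrow> d' \<le> d \<Longrightarrow> Q x d'"
  shows "\<exists>d>(0::real). \<forall>x\<in>S. Q x d"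
  using assms(1,2)
proof (induction rule: finite_induct)
  case empty then show ?case by (auto intro: exI[of _ 1])
next
  case (insert y S)
  then obtain d where d: "d > 0" "\<forall>x\<in>S. Q x d" by auto
  obtain d' where d': "d' > 0" "Q y d'" using insert by auto
  show ?case
    by (rule exI[of _ "min d d'"]) (use d d' mono in auto)
qed

lemma lb_finite:
  fixes B :: "real set" and I :: "'i set" and P :: "'i \<Rightarrow> real set"
  assumes s: "0 < s" and I: "finite I" and two: "\<exists>i\<in>I. \<exists>j\<in>I. i\<noteq>j"
    and a: "\<forall>i\<in>I. a i \<noteq> 0"
    and sum: "1 \<le> (\<Sum>i\<in>I. (1/\<bar>a i\<bar>) powr s)"
    and P: "\<forall>i\<in>I. P i \<subseteq> B \<and> P i \<noteq> {}"
    and h: "\<forall>i\<in>I. (\<lambda>x. a i * x + b i) ` P i = B"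
    and d0: "0 < \<delta>0"
    and gap: "\<forall>i\<in>I. \<forall>j\<in>I. i \<noteq> j \<longrightarrow> (\<forall>x\<in>P i. \<forall>y\<in>P j. \<delta>0 \<le> \<bar>x - y\<bar>)"
  shows "\<forall>\<U>. card \<U> = n \<longrightarrow> finite \<U> \<longrightarrow> (\<forall>U\<in>\<U>. bounded U) \<longrightarrow> B \<subseteq> \<Union>\<U>
           \<longrightarrow> \<delta>0 powr s \<le> (\<Sum>U\<in>\<U>. hweight s U)"
proof (induction n rule: less_induct)
  case (less n)
  show ?case
  proof (intro allI impI)
    fix \<U> :: "real set set"
    assume cardU: "card \<U> = n" and fin: "finite \<U>" and bdd: "\<forall>U\<in>\<U>. bounded U" and cov: "B \<subseteq> \<Union>\<U>"
    show "\<delta>0 powr s \<le> (\<Sum>U\<in>\<U>. hweight s U)"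
    proof (cases "\<exists>U\<in>\<U>. \<delta>0 \<le> diameter U")
      case True
      then obtain U where U: "U \<in> \<U>" "\<delta>0 \<le> diameter U" by auto
      then have "U \<noteq> {}" using d0 by auto
      then have "\<delta>0 powr s \<le> hweight s U" using U s d0 by (simp add: hweight_def powr_mono2)
      also have "\<dots> \<le> (\<Sum>U\<in>\<U>. hweight s U)"
        by (rule member_le_sum[OF U(1) _ fin]) (simp add: hweight_nonneg)
      finally show ?thesis .
    next
      case False
      then have small: "\<And>U. U \<in> \<U> \<Longrightarrow> diameter U < \<delta>0" by force
      have meet_one: "i = j" if hyp: "U \<in> \<U>" "i \<in> I" "j \<in> I" "U \<inter> P i \<noteq> {}" "U \<inter> P j \<noteq> {}" for U i j
      proof (rule ccontr)
        assume ij: "i \<noteq> j"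
        obtain x y where "x \<in> U" "x \<in> P i" "y \<in> U" "y \<in> P j" using hyp(4,5) by blast
        then have "\<delta>0 \<le> \<bar>x - y\<bar>" "\<bar>x-y\<bar> \<le> diameter U"
          using gap ij hyp diameter_bounded_bound[of U x y] bdd by (auto simp: dist_real_def)
        then show False using small[OF hyp(1)] by linarith
      qed
      define Ui where "Ui i = {U\<in>\<U>. U \<inter> P i \<noteq> {}}" for i
      have Ui_fin: "finite (Ui i)" for i using fin by (simp add: Ui_def)
      have Ui_less: "card (Ui i) < card \<U>" if i: "i \<in> I" for i
      proof -
        obtain j where j: "j \<in> I" "j \<noteq> i" using two i by metis
        obtain y where y: "y \<in> P j" using P j by auto
        then obtain U where U: "U \<in> \<U>" "y \<in> U" using P j cov by blast
        then have "U \<notin> Ui i" using meet_one[OF U(1) i j(1)] y j(2) unfolding Ui_def by auto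
        then have "Ui i \<subset> \<U>" using U unfolding Ui_def by blast
        then show ?thesis using fin by (rule psubset_card_mono[rotated])
      qed
      have each: "(1/\<bar>a i\<bar>) powr s * \<delta>0 powr s \<le> (\<Sum>U\<in>Ui i. hweight s U)" if i: "i \<in> I" for i
      proof -
        define f where "f = (\<lambda>x. a i * x + b i)"
        define V where "V = (\<lambda>U. f ` U) ` Ui i"
        have "card V \<le> card (Ui i)" unfolding V_def by (rule card_image_le[OF Ui_fin])
        then have cV: "card V < n" using Ui_less[OF i] cardU by simp
        have finV: "finite V" unfolding V_def using Ui_fin by simp
        have bddV: "\<forall>W\<in>V. bounded W" unfolding V_def f_def Ui_def using bdd
          by (auto intro: bounded_affine_image)
        have covV: "B \<subseteq> \<Union>V"
        proof
          fix y assume "y \<in> B"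
          then obtain x where x: "x \<in> P i" "y = f x" using h i unfolding f_def by blast
          then obtain U where U: "U \<in> \<U>" "x \<in> U" using P i cov by blast
          then have "U \<in> Ui i" using x unfolding Ui_def by auto
          then show "y \<in> \<Union>V" using x U unfolding V_def by auto
        qed
        have "\<delta>0 powr s \<le> (\<Sum>W\<in>V. hweight s W)"
          using less[rule_format, OF cV refl finV _ covV] bddV by blast
        also have "\<dots> \<le> (\<Sum>U\<in>Ui i. hweight s (f ` U))"
          unfolding V_def using sum_image_le[OF Ui_fin[of i], where g="hweight s" and f="\<lambda>U. f ` U"]
          by (simp add: hweight_nonneg o_def)
        also have "\<dots> = (\<Sum>U\<in>Ui i. \<bar>a i\<bar> powr s * hweight s U)"
          using bdd a i s unfolding f_def Ui_def by (intro sum.cong refl hweight_affine) auto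
        also have "\<dots> = \<bar>a i\<bar> powr s * (\<Sum>U\<in>Ui i. hweight s U)"
          by (simp add: sum_distrib_left)
        finally have *: "\<delta>0 powr s \<le> \<bar>a i\<bar> powr s * (\<Sum>U\<in>Ui i. hweight s U)" .
        have pos: "0 < \<bar>a i\<bar> powr s" using a i by simp
        have e: "(1/\<bar>a i\<bar>) powr s * \<bar>a i\<bar> powr s = 1" using pos by (simp add: powr_divide)
        have "(1/\<bar>a i\<bar>) powr s * \<delta>0 powr s \<le> (1/\<bar>a i\<bar>) powr s * (\<bar>a i\<bar> powr s * (\<Sum>U\<in>Ui i. hweight s U))"
          using * by (rule mult_left_mono) simp
        also have "\<dots> = (\<Sum>U\<in>Ui i. hweight s U)" using e by (simp add: mult.assoc[symmetric])
        finally show ?thesis .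
      qed
      have disj: "\<forall>i\<in>I. \<forall>j\<in>I. i \<noteq> j \<longrightarrow> Ui i \<inter> Ui j = {}"
        using meet_one unfolding Ui_def by blast
      have "\<delta>0 powr s \<le> (\<Sum>i\<in>I. (1/\<bar>a i\<bar>) powr s) * \<delta>0 powr s"
        using sum by (simp add: mult_le_cancel_right1)
      also have "\<dots> = (\<Sum>i\<in>I. (1/\<bar>a i\<bar>) powr s * \<delta>0 powr s)" by (simp add: sum_distrib_right)
      also have "\<dots> \<le> (\<Sum>i\<in>I. \<Sum>U\<in>Ui i. hweight s U)" by (rule sum_mono) (rule each)
      also have "\<dots> = (\<Sum>U\<in>(\<Union>i\<in>I. Ui i). hweight s U)"
        by (rule sum.UNION_disjoint[symmetric]) (use I Ui_fin disj in auto)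
      also have "\<dots> \<le> (\<Sum>U\<in>\<U>. hweight s U)"
        by (rule sum_mono2[OF fin]) (auto simp: Ui_def hweight_nonneg)
      finally show ?thesis .
    qed
  qed
qed

lemma eta_exists:
  fixes d s e :: real
  assumes "0 \<le> d" "0 < s" "0 < e"
  shows "\<exists>\<eta>>0. (d+\<eta>) powr s \<le> d powr s + e"
proof -
  have "(\<lambda>n. d + inverse (real (Suc n))) \<longlonglongrightarrow> d + 0"
    by (intro tendsto_add tendsto_const LIMSEQ_inverse_real_of_nat)
  then have "(\<lambda>n. (d + inverse (real (Suc n))) powr s) \<longlonglongrightarrow> d powr s"
    using assms by (intro tendsto_powr') (auto intro!: always_eventually)
  then have "eventually (\<lambda>n. (d + inverse (real (Suc n))) powr s < d powr s + e) sequentially"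
    using assms by (intro order_tendstoD(2)) auto
  then obtain n where "(d + inverse (real (Suc n))) powr s < d powr s + e"
    by (auto dest: eventually_happens)
  moreover have "0 < inverse (real (Suc n))" by simp
  ultimately show ?thesis by (blast intro: less_imp_le)
qed

lemma lb_countable:
  fixes B :: "real set" and U :: "nat \<Rightarrow> real set"
  assumes fin_lb: "\<And>\<U>. finite \<U> \<Longrightarrow> (\<forall>U\<in>\<U>. bounded U) \<Longrightarrow> B \<subseteq> \<Union>\<U> \<Longrightarrow> m \<le> (\<Sum>U\<in>\<U>. hweight s U)"
    and s: "0 < s" and B: "compact B"
    and cov: "B \<subseteq> (\<Union>i. U i)" and bdd: "\<And>i. bounded (U i)"
  shows "ennreal (m / 2 powr s) \<le> (\<Sum>i. ennreal (hweight s (U i)))"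
proof (rule ennreal_le_epsilon)
  fix e :: real assume e: "0 < e"
  define d where "d i = diameter (U i)" for i
  have d0: "0 \<le> d i" for i using diameter_ge_0[OF bdd] by (simp add: d_def)
  have ex: "\<forall>i. \<exists>\<eta>. \<eta> > 0 \<and> (d i+\<eta>) powr s \<le> d i powr s + e/2^(Suc i)"
  proof
    fix i show "\<exists>\<eta>. \<eta> > 0 \<and> (d i+\<eta>) powr s \<le> d i powr s + e/2^(Suc i)"
      using eta_exists[OF d0[of i] s, of "e/2^(Suc i)"] e by simp
  qed
  obtain \<eta> where "\<forall>i. \<eta> i > 0 \<and> (d i+\<eta> i) powr s \<le> d i powr s + e/2^(Suc i)"
    using choice[OF ex] by blast
  then have eta: "\<And>i. \<eta> i > 0" "\<And>i. (d i+\<eta> i) powr s \<le> d i powr s + e/2^(Suc i)"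
    by auto
  define V where "V i = (if U i = {} then {} else ball (SOME x. x \<in> U i) (d i + \<eta> i))" for i
  have openV: "open (V i)" for i by (simp add: V_def)
  have UV: "U i \<subseteq> V i" for i
  proof
    fix x assume x: "x \<in> U i"
    define c where "c = (SOME x. x \<in> U i)"
    have c: "c \<in> U i" unfolding c_def using x by (rule someI)
    have "dist c x \<le> d i" unfolding d_def by (rule diameter_bounded_bound[OF bdd c x])
    then have "x \<in> ball c (d i + \<eta> i)" using eta(1)[of i] by simp
    then show "x \<in> V i" using x unfolding V_def c_def by auto
  qed
  have cov': "B \<subseteq> (\<Union>i\<in>UNIV. V i)" using cov UV by blast
  have "\<exists>J. finite J \<and> B \<subseteq> (\<Union>i\<in>J. V i)"
    apply (rule compactE_image[OF B, of UNIV V])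
      apply (simp add: openV)
     apply (rule cov')
    apply blast
    done
  then obtain J where J: "finite J" "B \<subseteq> (\<Union>i\<in>J. V i)" by blast
  have bddV: "bounded (V i)" for i by (simp add: V_def)
  have hV: "hweight s (V i) \<le> 2 powr s * (hweight s (U i) + e/2^(Suc i))" for i
  proof (cases "U i = {}")
    case True then show ?thesis using e by (simp add: V_def hweight_def)
  next
    case False
    have r: "0 < d i + \<eta> i" using d0[of i] eta(1)[of i] by linarith
    then have "hweight s (V i) = (2 * (d i + \<eta> i)) powr s"
      using False s by (simp add: V_def hweight_def)
    also have "\<dots> = 2 powr s * (d i + \<eta> i) powr s" by (rule powr_mult)
    also have "\<dots> \<le> 2 powr s * (d i powr s + e/2^(Suc i))"
      by (rule mult_left_mono[OF eta(2)]) simp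
    also have "\<dots> = 2 powr s * (hweight s (U i) + e/2^(Suc i))"
      using False s by (simp add: hweight_def d_def)
    finally show ?thesis .
  qed
  have "m \<le> (\<Sum>W\<in>V ` J. hweight s W)"
    using fin_lb[of "V ` J"] J bddV by auto
  also have "\<dots> \<le> (\<Sum>i\<in>J. hweight s (V i))"
    using sum_image_le[OF J(1), where g="hweight s" and f=V] by (simp add: hweight_nonneg o_def)
  also have "\<dots> \<le> (\<Sum>i\<in>J. 2 powr s * (hweight s (U i) + e/2^(Suc i)))"
    by (rule sum_mono) (rule hV)
  also have "\<dots> = 2 powr s * ((\<Sum>i\<in>J. hweight s (U i)) + e * (\<Sum>i\<in>J. (1/2)^(Suc i)))"
    by (simp add: sum_distrib_left[symmetric] sum.distrib power_one_over) (simp add: sum_distrib_left)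
  also have "\<dots> \<le> 2 powr s * ((\<Sum>i\<in>J. hweight s (U i)) + e)"
  proof -
    have "(\<Sum>i\<in>J. (1/2::real)^(Suc i)) \<le> (\<Sum>i. (1/2)^(Suc i))"
      using power_half_series J(1) by (intro sum_le_suminf) (auto simp: sums_iff)
    also have "\<dots> = 1" using power_half_series by (simp add: sums_iff)
    finally have "e * (\<Sum>i\<in>J. (1/2::real)^(Suc i)) \<le> e" using e by (simp add: mult_left_le)
    then show ?thesis by (intro mult_left_mono) auto
  qed
  finally have "m / 2 powr s \<le> (\<Sum>i\<in>J. hweight s (U i)) + e"
    by (simp add: divide_le_eq mult.commute)
  then have "ennreal (m / 2 powr s) \<le> ennreal ((\<Sum>i\<in>J. hweight s (U i)) + e)"
    by (rule ennreal_leI)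
  also have "\<dots> = (\<Sum>i\<in>J. ennreal (hweight s (U i))) + ennreal e"
    using e by (simp add: hweight_nonneg sum_nonneg)
  also have "\<dots> \<le> (\<Sum>i. ennreal (hweight s (U i))) + ennreal e"
    by (intro add_mono sum_le_suminf J(1)) auto
  finally show "ennreal (m / 2 powr s) \<le> (\<Sum>i. ennreal (hweight s (U i))) + ennreal e" .
qed

definition hcov :: "real \<Rightarrow> real \<Rightarrow> real set \<Rightarrow> real \<Rightarrow> bool" where
 "hcov s \<delta> X t \<longleftrightarrow> (\<exists>Us. X \<subseteq> \<Union>(set Us) \<and> (\<forall>U\<in>set Us. bounded U \<and> diameter U \<le> \<delta>)
     \<and> sum_list (map (hweight s) Us) \<le> t)"

lemma hcov_mono: "X \<subseteq> Y \<Longrightarrow> t \<le> t' \<Longrightarrow> hcov s \<delta> Y t \<Longrightarrow> hcov s \<delta> X t'"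
  unfolding hcov_def by (meson order_trans)

lemma hcov_delta_mono: "\<delta> \<le> \<delta>' \<Longrightarrow> hcov s \<delta> X t \<Longrightarrow> hcov s \<delta>' X t"
  unfolding hcov_def by (meson order_trans)

lemma hcov_Un: "hcov s \<delta> X a \<Longrightarrow> hcov s \<delta> Y b \<Longrightarrow> hcov s \<delta> (X \<union> Y) (a+b)"
proof -
  assume "hcov s \<delta> X a" "hcov s \<delta> Y b"
  then obtain Us Vs where U: "X \<subseteq> \<Union>(set Us)" "\<forall>U\<in>set Us. bounded U \<and> diameter U \<le> \<delta>"
      "sum_list (map (hweight s) Us) \<le> a"
    and V: "Y \<subseteq> \<Union>(set Vs)" "\<forall>U\<in>set Vs. bounded U \<and> diameter U \<le> \<delta>"
      "sum_list (map (hweight s) Vs) \<le> b"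
    unfolding hcov_def by blast
  show ?thesis unfolding hcov_def
    by (rule exI[of _ "Us @ Vs"]) (use U V in auto)
qed

lemma hcov_empty: "hcov s \<delta> {} 0"
  unfolding hcov_def by (rule exI[of _ "[]"]) simp

lemma hcov_UN: "finite I \<Longrightarrow> (\<forall>i\<in>I. hcov s \<delta> (X i) (t i)) \<Longrightarrow> hcov s \<delta> (\<Union>i\<in>I. X i) (\<Sum>i\<in>I. t i)"
proof (induction rule: finite_induct)
  case empty then show ?case by (simp add: hcov_empty)
next
  case (insert x F)
  then have "hcov s \<delta> (X x \<union> (\<Union>i\<in>F. X i)) (t x + (\<Sum>i\<in>F. t i))"
    by (intro hcov_Un) auto
  then show ?case using insert by simp
qed

lemma hcov_affine:
  assumes s: "0 < s" and a: "a \<noteq> 0" and h: "hcov s \<delta> X t"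
  shows "hcov s (\<bar>a\<bar>*\<delta>) ((\<lambda>x. a*x+b) ` X) (\<bar>a\<bar> powr s * t)"
proof -
  obtain Us where U: "X \<subseteq> \<Union>(set Us)" "\<forall>U\<in>set Us. bounded U \<and> diameter U \<le> \<delta>"
      "sum_list (map (hweight s) Us) \<le> t"
    using h unfolding hcov_def by blast
  define f where "f = (\<lambda>x::real. a*x+b)"
  let ?Vs = "map (\<lambda>U. f ` U) Us"
  have "(\<lambda>x. a*x+b) ` X \<subseteq> \<Union>(set ?Vs)" using U(1) unfolding f_def by auto
  moreover have "\<forall>V\<in>set ?Vs. bounded V \<and> diameter V \<le> \<bar>a\<bar>*\<delta>"
  proof
    fix V assume "V \<in> set ?Vs"
    then obtain U where "U \<in> set Us" "V = f ` U" by auto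
    then show "bounded V \<and> diameter V \<le> \<bar>a\<bar>*\<delta>"
      using U(2) a unfolding f_def
      by (auto simp: diameter_affine bounded_affine_image intro: mult_left_mono)
  qed
  moreover have "sum_list (map (hweight s) ?Vs) = \<bar>a\<bar> powr s * sum_list (map (hweight s) Us)"
  proof -
    have "map (hweight s) ?Vs = map (\<lambda>U. \<bar>a\<bar> powr s * hweight s U) Us"
      unfolding map_map o_def by (rule map_cong[OF refl]) (use U(2) a s in \<open>simp add: f_def hweight_affine\<close>)
    then have "sum_list (map (hweight s) ?Vs) = sum_list (map (\<lambda>U. \<bar>a\<bar> powr s * hweight s U) Us)"
      by (rule arg_cong)
    also have "\<dots> = \<bar>a\<bar> powr s * sum_list (map (hweight s) Us)" by (rule sum_list_const_mult)
    finally show ?thesis .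
  qed
  moreover have "\<bar>a\<bar> powr s * sum_list (map (hweight s) Us) \<le> \<bar>a\<bar> powr s * t"
    using U(3) by (simp add: mult_left_mono)
  ultimately show ?thesis unfolding hcov_def f_def by (metis order_refl)
qed

lemma hcov_unit_base: "0 < s \<Longrightarrow> hcov s 1 {0..1} 1"
  unfolding hcov_def by (rule exI[of _ "[{0..1}]"]) (simp add: hweight_def)

lemma hcov_unit: "0 < s \<Longrightarrow> hcov s (1/2^k) {0..1} ((2 * (1/2) powr s)^k)"
proof (induction k)
  case 0 then show ?case by (simp add: hcov_unit_base)
next
  case (Suc k)
  have "hcov s (\<bar>1/2\<bar> * (1/2^k)) ((\<lambda>x. (1/2)*x+0) ` {0..1}) (\<bar>1/2\<bar> powr s * (2 * (1/2) powr s)^k)"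
    by (rule hcov_affine[OF Suc.prems _ Suc.IH[OF Suc.prems]]) simp
  moreover have "hcov s (\<bar>1/2\<bar> * (1/2^k)) ((\<lambda>x. (1/2)*x+1/2) ` {0..1}) (\<bar>1/2\<bar> powr s * (2 * (1/2) powr s)^k)"
    by (rule hcov_affine[OF Suc.prems _ Suc.IH[OF Suc.prems]]) simp
  ultimately have h1: "hcov s (1/2^Suc k) ((\<lambda>x. (1/2)*x+0) ` {0..1} \<union> (\<lambda>x. (1/2)*x+1/2) ` {0..1})
      ((1/2) powr s * (2 * (1/2) powr s)^k + (1/2) powr s * (2 * (1/2) powr s)^k)"
    by (intro hcov_Un) auto
  have sub: "{0..1} \<subseteq> (\<lambda>x. (1/2)*x+0) ` {0..1} \<union> (\<lambda>x::real. (1/2)*x+1/2) ` {0..1}"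
  proof
    fix y :: real assume y: "y \<in> {0..1}"
    show "y \<in> (\<lambda>x. (1/2)*x+0) ` {0..1} \<union> (\<lambda>x::real. (1/2)*x+1/2) ` {0..1}"
    proof (cases "y \<le> 1/2")
      case True
      then have "2*y \<in> {0..1}" "y = (1/2)*(2*y)+0" using y by auto
      then show ?thesis by blast
    next
      case False
      then have "2*y-1 \<in> {0..1}" using y by auto
      moreover have "y = (1/2)*(2*y-1)+1/2" by (simp add: field_simps)
      ultimately show ?thesis by blast
    qed
  qed
  show ?case by (rule hcov_mono[OF sub _ h1]) (simp add: algebra_simps)
qed

lemma hcov_pre:
  assumes d: "0 < \<delta>" and h: "hcov s \<delta> X t"
  shows "hausdorff_pre s \<delta> X \<le> ennreal t"
proof -
  obtain Us where U: "X \<subseteq> \<Union>(set Us)" "\<forall>U\<in>set Us. bounded U \<and> diameter U \<le> \<delta>"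
      "sum_list (map (hweight s) Us) \<le> t"
    using h unfolding hcov_def by blast
  define W where "W i = (if i < length Us then Us!i else {})" for i
  have cov: "X \<subseteq> (\<Union>i. W i)"
  proof
    fix x assume "x \<in> X"
    then obtain U where "U \<in> set Us" "x \<in> U" using U(1) by auto
    then obtain i where "i < length Us" "Us!i = U" by (auto simp: in_set_conv_nth)
    then show "x \<in> (\<Union>i. W i)" using \<open>x \<in> U\<close> unfolding W_def by (intro UN_I[of i]) auto
  qed
  have WW: "\<forall>i. bounded (W i) \<and> diameter (W i) \<le> \<delta>"
    using U(2) d unfolding W_def by (auto simp: less_imp_le)
  have "(\<Sum>i. ennreal (hweight s (W i))) = (\<Sum>i<length Us. ennreal (hweight s (W i)))"
    by (rule suminf_finite) (auto simp: W_def hweight_def)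
  also have "\<dots> = ennreal (\<Sum>i<length Us. hweight s (Us!i))"
    by (simp add: W_def hweight_nonneg)
  also have "\<dots> = ennreal (sum_list (map (hweight s) Us))"
    by (simp add: sum_list_sum_nth atLeast0LessThan)
  also have "\<dots> \<le> ennreal t" using U(3) by (rule ennreal_leI)
  finally have "(\<Sum>i. ennreal (hweight s (W i))) \<le> ennreal t" .
  moreover have "hausdorff_pre s \<delta> X \<le> (\<Sum>i. ennreal (hweight s (W i)))"
    unfolding hausdorff_pre_def by (rule INF_lower) (use cov WW in auto)
  ultimately show ?thesis by (rule order_trans[rotated])
qed

lemma pow_powr: "0 < x \<Longrightarrow> (x^m) powr s = (x powr s)^m" for x :: real
  by (induction m) (auto simp: powr_mult)

lemma geom_le: "0 \<le> a \<Longrightarrow> a < 1 \<Longrightarrow> (\<Sum>i<N. a^i) \<le> 1/(1-a)" for a :: real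
proof -
  assume a: "0 \<le> a" "a < 1"
  have "(\<Sum>i<N. a^i) = (a^N - 1)/(a - 1)" using a by (intro geometric_sum) auto
  also have "\<dots> = (1 - a^N)/(1-a)"
  proof -
    have "a - 1 \<noteq> 0" "1 - a \<noteq> 0" using a by auto
    then show ?thesis by (simp add: field_simps)
  qed
  also have "\<dots> \<le> 1/(1-a)" using a by (intro divide_right_mono) auto
  finally show ?thesis .
qed

lemma prod_sum: "(\<Sum>(m,n)\<in>{..<N}\<times>{..<N}. a^m*b^n) = (\<Sum>m<N. a^m)*(\<Sum>n<N. b^n)" for a b :: real
  by (simp add: sum_product sum.cartesian_product)

lemma finite_J1: "finite {(m,n). 0<m+n \<and> m+n<(N::nat)}"
  by (rule finite_subset[of _ "{..<N}\<times>{..<N}"]) auto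
lemma finite_J2: "finite {(m,n). m+n=(N::nat)}"
  by (rule finite_subset[of _ "{..N}\<times>{..N}"]) auto

lemma J2_sum:
  fixes a b \<rho> :: real
  assumes "0 \<le> a" "a \<le> \<rho>" "0 \<le> b" "b \<le> \<rho>"
  shows "(\<Sum>(m,n)\<in>{(m,n). m+n=N}. a^m*b^n) \<le> (real N+1)*\<rho>^N"
proof -
  have eq: "{(m,n). m+n=N} = (\<lambda>m. (m,N-m)) ` {..N}" by (auto simp: image_iff)
  have "(\<Sum>(m,n)\<in>{(m,n). m+n=N}. a^m*b^n) = (\<Sum>m\<in>{..N}. a^m*b^(N-m))"
    unfolding eq by (subst sum.reindex) (auto simp: inj_on_def)
  also have "\<dots> \<le> (\<Sum>m\<in>{..N}. \<rho>^N)"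
  proof (rule sum_mono)
    fix m assume "m \<in> {..N}"
    then have "\<rho>^N = \<rho>^m*\<rho>^(N-m)" by (simp add: power_add[symmetric])
    moreover have "a^m*b^(N-m) \<le> \<rho>^m*\<rho>^(N-m)" using assms
      by (intro mult_mono power_mono) auto
    ultimately show "a^m*b^(N-m) \<le> \<rho>^N" by simp
  qed
  also have "\<dots> = (real N+1)*\<rho>^N" by simp
  finally show ?thesis .
qed

lemma J1_sum:
  fixes a b :: real
  assumes "0 \<le> a" "a < 1" "0 \<le> b" "b < 1" "1 \<le> N"
  shows "(\<Sum>(m,n)\<in>{(m,n). 0<m+n \<and> m+n<N}. a^m*b^n) \<le> 1/((1-a)*(1-b)) - 1"
proof -
  let ?A = "{..<N}\<times>{..<N}"
  have "(\<Sum>(m,n)\<in>{(m,n). 0<m+n \<and> m+n<N}. a^m*b^n) \<le> (\<Sum>(m,n)\<in>?A - {(0,0)}. a^m*b^n)"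
    by (rule sum_mono2) (use assms in auto)
  also have "\<dots> = (\<Sum>(m,n)\<in>?A. a^m*b^n) - 1"
    using assms(5) by (subst sum_diff1) auto
  also have "\<dots> = (\<Sum>m<N. a^m)*(\<Sum>n<N. b^n) - 1" by (simp add: prod_sum)
  also have "\<dots> \<le> (1/(1-a))*(1/(1-b)) - 1"
    using assms by (intro diff_right_mono mult_mono geom_le) (auto intro: sum_nonneg)
  finally show ?thesis by simp
qed

lemma n_pow_lim: "0 \<le> \<rho> \<Longrightarrow> \<rho> < 1 \<Longrightarrow> (\<lambda>N. (real N+1)*\<rho>^N) \<longlonglongrightarrow> 0" for \<rho> :: real
proof -
  assume r: "0 \<le> \<rho>" "\<rho> < 1"
  have "(\<lambda>N. of_nat N*\<rho>^N + \<rho>^N) \<longlonglongrightarrow> 0 + 0"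
    using r by (intro tendsto_add powser_times_n_limit_0 LIMSEQ_power_zero) auto
  then show ?thesis by (simp add: algebra_simps)
qed

definition Fm :: "real \<Rightarrow> real \<Rightarrow> real set \<Rightarrow> real set" where
 "Fm p q X = S1 p ` X \<union> S2 q ` X \<union> S3 p ` X \<union> S4 q ` X"

lemma Fm_mono: "X \<subseteq> Y \<Longrightarrow> Fm p q X \<subseteq> Fm p q Y" unfolding Fm_def by auto

locale pq = fixes p q :: real assumes p0: "0 < p" and p1: "p < 1/2" and q0: "0 < q" and q1: "q < 1/2"
begin

lemma Fm_cases:
  assumes "x \<in> Fm p q X"
  obtains y where "y \<in> X" "x = p*y" | y where "y \<in> X" "x = q*y"
   | y where "y \<in> X" "x = p*y+1-p" | y where "y \<in> X" "x = q*y+1-q"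
  using assms unfolding Fm_def S1_def S2_def S3_def S4_def by auto

lemma contr_step:
  fixes r a b c e :: real
  assumes "0 < r" "r < 1/2" "\<bar>a-b\<bar> \<le> e"
  shows "\<bar>(r*a+c) - (r*b+c)\<bar> \<le> e/2"
proof -
  have e: "0 \<le> e" using assms(3) by linarith
  have "(r*a+c) - (r*b+c) = r*(a-b)" by (simp add: algebra_simps)
  then have "\<bar>(r*a+c) - (r*b+c)\<bar> = r*\<bar>a-b\<bar>" using assms(1) by (simp add: abs_mult)
  also have "\<dots> \<le> (1/2)*e" using assms by (intro mult_mono) auto
  finally show ?thesis by simp
qed

lemma fix_close:
  assumes X: "Fm p q X = X" and Y: "Fm p q Y = Y" and H: "\<forall>x\<in>X. \<exists>y\<in>Y. \<bar>x-y\<bar> \<le> e"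
  shows "\<forall>x\<in>X. \<exists>y\<in>Y. \<bar>x-y\<bar> \<le> e/2"
proof
  fix x assume "x\<in>X"
  then have "x \<in> Fm p q X" using X by simp
  then show "\<exists>y\<in>Y. \<bar>x-y\<bar> \<le> e/2"
  proof (cases rule: Fm_cases)
    case (1 x')
    then obtain y' where y': "y'\<in>Y" "\<bar>x'-y'\<bar> \<le> e" using H by blast
    have "p*y'+0 \<in> Fm p q Y" using y' unfolding Fm_def S1_def by auto
    moreover have "\<bar>(p*x'+0) - (p*y'+0)\<bar> \<le> e/2" by (rule contr_step[OF p0 p1 y'(2)])
    ultimately show ?thesis using Y 1 by (metis add_0_right)
  next
    case (2 x')
    then obtain y' where y': "y'\<in>Y" "\<bar>x'-y'\<bar> \<le> e" using H by blast
    have "q*y'+0 \<in> Fm p q Y" using y' unfolding Fm_def S2_def by auto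
    moreover have "\<bar>(q*x'+0) - (q*y'+0)\<bar> \<le> e/2" by (rule contr_step[OF q0 q1 y'(2)])
    ultimately show ?thesis using Y 2 by (metis add_0_right)
  next
    case (3 x')
    then obtain y' where y': "y'\<in>Y" "\<bar>x'-y'\<bar> \<le> e" using H by blast
    have "p*y'+(1-p) \<in> Fm p q Y" using y' unfolding Fm_def S3_def by auto
    moreover have "\<bar>(p*x'+(1-p)) - (p*y'+(1-p))\<bar> \<le> e/2" by (rule contr_step[OF p0 p1 y'(2)])
    ultimately show ?thesis using Y 3 by (metis add_diff_eq)
  next
    case (4 x')
    then obtain y' where y': "y'\<in>Y" "\<bar>x'-y'\<bar> \<le> e" using H by blast
    have "q*y'+(1-q) \<in> Fm p q Y" using y' unfolding Fm_def S4_def by auto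
    moreover have "\<bar>(q*x'+(1-q)) - (q*y'+(1-q))\<bar> \<le> e/2" by (rule contr_step[OF q0 q1 y'(2)])
    ultimately show ?thesis using Y 4 by (metis add_diff_eq)
  qed
qed

lemma fix_subset:
  assumes X: "Fm p q X = X" "compact X" and Y: "Fm p q Y = Y" "compact Y" "Y \<noteq> {}"
  shows "X \<subseteq> Y"
proof -
  obtain R where R: "\<And>x. x \<in> X \<Longrightarrow> \<bar>x\<bar> \<le> R" using compact_imp_bounded[OF X(2)]
    by (auto simp: bounded_iff)
  obtain R' where R': "\<And>x. x \<in> Y \<Longrightarrow> \<bar>x\<bar> \<le> R'" using compact_imp_bounded[OF Y(2)]
    by (auto simp: bounded_iff)
  obtain y0 where y0: "y0 \<in> Y" using Y(3) by auto
  have H0: "\<forall>x\<in>X. \<exists>y\<in>Y. \<bar>x-y\<bar> \<le> R + R'"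
    using y0 R R'[OF y0] by (smt (verit))
  have Hn: "\<forall>x\<in>X. \<exists>y\<in>Y. \<bar>x-y\<bar> \<le> (R+R')/2^n" for n
  proof (induction n)
    case 0 then show ?case using H0 by simp
  next
    case (Suc n)
    from fix_close[OF X(1) Y(1) Suc] show ?case by (simp add: field_simps)
  qed
  show ?thesis
  proof
    fix x assume x: "x \<in> X"
    have "\<exists>y\<in>Y. dist y x < e" if e: "e > 0" for e
    proof -
      obtain n where n: "(R+R')/e < real n" using reals_Archimedean2 by blast
      have "real n < 2^n" by (rule of_nat_less_two_power)
      then have "(R+R')/e < 2^n" using n by linarith
      then have "(R+R') < e * 2^n" using e by (simp add: divide_less_eq mult.commute)
      then have "(R+R')/2^n < e" by (simp add: divide_less_eq)
      then show ?thesis using Hn[of n] x by (force simp: dist_real_def)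
    qed
    then show "x \<in> Y" using closed_approachable[of Y x] compact_imp_closed[OF Y(2)] by blast
  qed
qed

lemma Fm_mem: "x \<in> Fm p q Y \<longleftrightarrow> x/p \<in> Y \<or> x/q \<in> Y \<or> (x-(1-p))/p \<in> Y \<or> (x-(1-q))/q \<in> Y"
proof -
  have a: "x \<in> (\<lambda>y. r*y+c) ` Y \<longleftrightarrow> (x-c)/r \<in> Y" if "r \<noteq> 0" for r c
  proof
    assume "x \<in> (\<lambda>y. r*y+c) ` Y" then show "(x-c)/r \<in> Y" using that by auto
  next
    assume "(x-c)/r \<in> Y"
    moreover have "x = r*((x-c)/r)+c" using that by simp
    ultimately show "x \<in> (\<lambda>y. r*y+c) ` Y" by blast
  qed
  have "Fm p q Y = (\<lambda>y. p*y+0) ` Y \<union> (\<lambda>y. q*y+0) ` Y \<union> (\<lambda>y. p*y+(1-p)) ` Y \<union> (\<lambda>y. q*y+(1-q)) ` Y"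
    unfolding Fm_def S1_def S2_def S3_def S4_def by (simp add: add_diff_eq)
  then show ?thesis using a[of p 0] a[of q 0] a[of p "1-p"] a[of q "1-q"] p0 q0 by auto
qed

lemma Fm_Inter:
  assumes dec: "decseq X" and x: "\<forall>n. x \<in> Fm p q (X n)"
  shows "x \<in> Fm p q (\<Inter>n. X n)"
proof (rule ccontr)
  assume "x \<notin> Fm p q (\<Inter>n. X n)"
  then obtain n1 n2 n3 n4 where "x/p \<notin> X n1" "x/q \<notin> X n2" "(x-(1-p))/p \<notin> X n3" "(x-(1-q))/q \<notin> X n4"
    unfolding Fm_mem by blast
  moreover have "X (n1+n2+n3+n4) \<subseteq> X n1" "X (n1+n2+n3+n4) \<subseteq> X n2" "X (n1+n2+n3+n4) \<subseteq> X n3" "X (n1+n2+n3+n4) \<subseteq> X n4"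
    using dec by (auto simp: decseq_def)
  ultimately show False using x[rule_format, of "n1+n2+n3+n4"] unfolding Fm_mem by blast
qed

lemma Fm_unit: "Fm p q {0..1} \<subseteq> {0..1}"
proof
  fix x assume "x \<in> Fm p q {0..1}"
  then show "x \<in> {0..1}"
  proof (cases rule: Fm_cases)
    case (1 y) then show ?thesis using p0 p1 by (auto intro: mult_le_one)
  next
    case (2 y) then show ?thesis using q0 q1 by (auto intro: mult_le_one)
  next
    case (3 y) then have "p*y \<le> p" using p0 by (simp add: mult_left_le)
    moreover have "0 \<le> p*y" using 3 p0 by simp
    ultimately show ?thesis unfolding atLeastAtMost_iff using 3 p0 p1 by linarith
  next
    case (4 y) then have "q*y \<le> q" using q0 by (simp add: mult_left_le)
    moreover have "0 \<le> q*y" using 4 q0 by simp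
    ultimately show ?thesis unfolding atLeastAtMost_iff using 4 q0 q1 by linarith
  qed
qed

lemma compact_Fm: "compact X \<Longrightarrow> compact (Fm p q X)"
  unfolding Fm_def S1_def S2_def S3_def S4_def
  by (intro compact_Un compact_continuous_image continuous_intros) auto

definition XX :: "nat \<Rightarrow> real set" where "XX n = (Fm p q ^^ n) {0..1}"

lemma XX_Suc: "XX (Suc n) = Fm p q (XX n)" by (simp add: XX_def)

lemma XX_dec: "XX (Suc n) \<subseteq> XX n"
proof (induction n)
  case 0 then show ?case using Fm_unit by (simp add: XX_def)
next
  case (Suc n) then show ?case by (simp add: XX_Suc Fm_mono)
qed

lemma XX_decseq: "decseq XX"
  using XX_dec by (simp add: decseq_Suc_iff)

lemma XX_compact: "compact (XX n)"
  by (induction n) (auto simp: XX_Suc compact_Fm, simp add: XX_def)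

lemma XX_unit: "XX n \<subseteq> {0..1}"
proof -
  have "XX n \<subseteq> XX 0" using XX_decseq by (simp add: decseq_def)
  then show ?thesis by (simp add: XX_def)
qed

lemma XX_zero: "0 \<in> XX n"
proof (induction n)
  case 0 then show ?case by (simp add: XX_def)
next
  case (Suc n) then show ?case by (auto simp: XX_Suc Fm_def S1_def)
qed

definition K0 :: "real set" where "K0 = (\<Inter>n. XX n)"

lemma K0_props: "compact K0" "K0 \<noteq> {}" "Fm p q K0 = K0" "K0 \<subseteq> {0..1}"
proof -
  show "compact K0" unfolding K0_def
    using XX_compact by (intro compact_Inter) auto
  show "K0 \<noteq> {}" using XX_zero unfolding K0_def by blast
  show "K0 \<subseteq> {0..1}" using XX_unit[of 0] unfolding K0_def by blast
  show "Fm p q K0 = K0"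
  proof
    show "Fm p q K0 \<subseteq> K0" unfolding K0_def
    proof (intro INT_greatest)
      fix n
      have "Fm p q (\<Inter>n. XX n) \<subseteq> Fm p q (XX n)" by (intro Fm_mono) auto
      also have "\<dots> = XX (Suc n)" by (simp add: XX_Suc)
      also have "\<dots> \<subseteq> XX n" by (rule XX_dec)
      finally show "Fm p q (\<Inter>n. XX n) \<subseteq> XX n" .
    qed
    show "K0 \<subseteq> Fm p q K0"
    proof
      fix x assume "x \<in> K0"
      then have "\<forall>n. x \<in> Fm p q (XX n)" unfolding K0_def by (auto simp flip: XX_Suc)
      then show "x \<in> Fm p q K0" unfolding K0_def by (rule Fm_Inter[OF XX_decseq])
    qed
  qed
qed

lemma Kpq_eq: "Kpq p q = K0"
proof -
  have F: "Fm p q K = S1 p ` K \<union> S2 q ` K \<union> S3 p ` K \<union> S4 q ` K" for K by (simp add: Fm_def)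
  show ?thesis unfolding Kpq_def
  proof (rule the_equality)
    show "compact K0 \<and> K0 \<noteq> {} \<and> K0 = S1 p ` K0 \<union> S2 q ` K0 \<union> S3 p ` K0 \<union> S4 q ` K0"
      using K0_props by (simp add: F[symmetric])
  next
    fix K assume K: "compact K \<and> K \<noteq> {} \<and> K = S1 p ` K \<union> S2 q ` K \<union> S3 p ` K \<union> S4 q ` K"
    then have "Fm p q K = K" by (simp add: F)
    then show "K = K0" using fix_subset K K0_props by (metis subset_antisym)
  qed
qed

abbreviation KK where "KK \<equiv> Kpq p q"
definition BB :: "real set" where "BB = (\<lambda>x. p*x) ` KK \<union> (\<lambda>x. q*x) ` KK"
abbreviation AA where "AA \<equiv> Apq p q"
definition cc :: real where "cc = max p q"

lemma cc: "0 < cc" "cc < 1/2" "p \<le> cc" "q \<le> cc" using p0 p1 q0 q1 by (auto simp: cc_def)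

lemma KK_props: "compact KK" "KK \<noteq> {}" "Fm p q KK = KK" "KK \<subseteq> {0..1}"
  using K0_props by (simp_all add: Kpq_eq)

lemma refl_Fm: "(\<lambda>x. 1-x) ` Fm p q X = Fm p q ((\<lambda>x. 1-x) ` X)"
proof -
  have 1: "(\<lambda>x. 1-x) ` (S1 p ` X) = S3 p ` ((\<lambda>x. 1-x) ` X)"
    unfolding S1_def S3_def image_image by (rule image_cong) (auto simp: algebra_simps)
  have 2: "(\<lambda>x. 1-x) ` (S2 q ` X) = S4 q ` ((\<lambda>x. 1-x) ` X)"
    unfolding S2_def S4_def image_image by (rule image_cong) (auto simp: algebra_simps)
  have 3: "(\<lambda>x. 1-x) ` (S3 p ` X) = S1 p ` ((\<lambda>x. 1-x) ` X)"
    unfolding S1_def S3_def image_image by (rule image_cong) (auto simp: algebra_simps)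
  have 4: "(\<lambda>x. 1-x) ` (S4 q ` X) = S2 q ` ((\<lambda>x. 1-x) ` X)"
    unfolding S2_def S4_def image_image by (rule image_cong) (auto simp: algebra_simps)
  show ?thesis unfolding Fm_def image_Un 1 2 3 4 by blast
qed

lemma KK_sym: "(\<lambda>x. 1-x) ` KK = KK"
proof -
  have c: "compact ((\<lambda>x. 1-x) ` KK)" using KK_props
    by (intro compact_continuous_image continuous_intros) auto
  have f: "Fm p q ((\<lambda>x. 1-x) ` KK) = (\<lambda>x. 1-x) ` KK"
    using refl_Fm[of KK] KK_props by simp
  show ?thesis using fix_subset[OF f c KK_props(3,1,2)] fix_subset[OF KK_props(3,1) f c] KK_props(2)
    by blast
qed

lemma AA_def': "AA = (\<lambda>x. p*x+1-p) ` KK \<union> (\<lambda>x. q*x+1-q) ` KK"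
  by (simp add: Apq_def S3_def S4_def)

lemma AA_refl: "AA = (\<lambda>x. 1-x) ` BB"
proof -
  have "(\<lambda>x. 1-x) ` BB = (\<lambda>x. 1-p*x) ` KK \<union> (\<lambda>x. 1-q*x) ` KK"
    unfolding BB_def image_Un image_image by simp
  also have "\<dots> = (\<lambda>x. p*x+1-p) ` ((\<lambda>x. 1-x) ` KK) \<union> (\<lambda>x. q*x+1-q) ` ((\<lambda>x. 1-x) ` KK)"
    unfolding image_image by (intro arg_cong2[where f="(\<union>)"] image_cong) (auto simp: algebra_simps)
  also have "\<dots> = AA" unfolding KK_sym AA_def' ..
  finally show ?thesis by simp
qed

lemma BB_refl: "BB = (\<lambda>x. 1-x) ` AA"
  unfolding AA_refl image_image by simp

lemma KK_AB: "KK = AA \<union> BB"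
proof -
  have "KK = Fm p q KK" using KK_props by simp
  also have "\<dots> = AA \<union> BB" unfolding Fm_def Apq_def BB_def S1_def S2_def by (simp add: Un_ac)
  finally show ?thesis .
qed

lemma AA_sub: "AA \<subseteq> KK" and BB_sub: "BB \<subseteq> KK" using KK_AB by auto

lemma pK_sub: "(\<lambda>x. p*x) ` KK \<subseteq> KK" and qK_sub: "(\<lambda>x. q*x) ` KK \<subseteq> KK"
  using BB_sub unfolding BB_def by auto

lemma BB_range: "BB \<subseteq> {0..cc}"
proof
  fix x assume "x \<in> BB"
  then obtain y where y: "y \<in> KK" "x = p*y \<or> x = q*y" unfolding BB_def by auto
  then have "0 \<le> y" "y \<le> 1" using KK_props(4) by auto
  then have "p*y \<le> p" "q*y \<le> q" "0 \<le> p*y" "0 \<le> q*y" using p0 q0 by (auto simp: mult_left_le)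
  then show "x \<in> {0..cc}" using y cc by auto
qed

lemma AA_range: "AA \<subseteq> {1-cc..1}"
proof
  fix x assume "x \<in> AA"
  then have "1 - x \<in> BB" using BB_refl by auto
  then show "x \<in> {1-cc..1}" using BB_range by auto
qed

lemma compact_AA: "compact AA" unfolding AA_def' using KK_props
  by (intro compact_Un compact_continuous_image continuous_intros) auto
lemma compact_BB: "compact BB" unfolding BB_def using KK_props
  by (intro compact_Un compact_continuous_image continuous_intros) auto
lemma BB_ne: "BB \<noteq> {}" unfolding BB_def using KK_props by auto
lemma AA_ne: "AA \<noteq> {}" using BB_ne AA_refl by auto

lemma KK_cases:
  assumes "y \<in> KK"
  obtains "y \<in> AA" | z where "z \<in> KK" "y = p*z" | z where "z \<in> KK" "y = q*z"
  using assms KK_AB unfolding BB_def by blast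

lemma scaled_in_KK: "y \<in> KK \<Longrightarrow> p^m*q^n*y \<in> KK"
proof (induction m)
  case 0 then show ?case
  proof (induction n)
    case 0 then show ?case by simp
  next
    case (Suc n) then show ?case using qK_sub by (auto simp: mult.assoc)
  qed
next
  case (Suc m) then have "p*(p^m*q^n*y) \<in> KK" using pK_sub by auto
  then show ?case by (simp add: mult.assoc)
qed

lemma scaled_in_BB: "y \<in> KK \<Longrightarrow> (m,n) \<noteq> (0,0) \<Longrightarrow> p^m*q^n*y \<in> BB"
proof (cases m)
  case 0 assume y: "y \<in> KK" and mn: "(m,n) \<noteq> (0,0)"
  then obtain n' where n': "n = Suc n'" using 0 by (cases n) auto
  have "q*(p^m*q^n'*y) \<in> BB" using scaled_in_KK[OF y] unfolding BB_def by auto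
  then show ?thesis using n' by (simp add: algebra_simps)
next
  case (Suc m') assume y: "y \<in> KK"
  have "p*(p^m'*q^n*y) \<in> BB" using scaled_in_KK[OF y] unfolding BB_def by auto
  then show ?thesis using Suc by (simp add: algebra_simps)
qed

lemma S1_pow: "(S1 p ^^ m) = (\<lambda>x. p^m*x)"
  by (induction m) (auto simp: S1_def)
lemma S2_pow: "(S2 q ^^ m) = (\<lambda>x. q^m*x)"
  by (induction m) (auto simp: S2_def)

lemma cc_pow: "(m,n) \<noteq> (0,0) \<Longrightarrow> p^m*q^n \<le> cc"
proof -
  assume mn: "(m,n) \<noteq> (0,0)"
  have "p^m*q^n \<le> cc^m*cc^n" using cc p0 q0 by (intro mult_mono power_mono) auto
  also have "\<dots> = cc^(m+n)" by (simp add: power_add)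
  also have "\<dots> \<le> cc^1" using mn cc by (intro power_decreasing) auto
  finally show ?thesis by simp
qed

lemma AA_scaled_not:
  assumes a: "a \<in> AA" and a': "a' \<in> AA" and eq: "p^m*q^n*a = a'"
  shows "m = 0 \<and> n = 0"
proof (rule ccontr)
  assume "\<not> (m = 0 \<and> n = 0)"
  then have "p^m*q^n \<le> cc" using cc_pow by auto
  moreover have "a \<in> {1-cc..1}" "a' \<in> {1-cc..1}" using a a' AA_range by auto
  then have "0 \<le> a" "a \<le> 1" "1 - cc \<le> a'" using cc by auto
  ultimately have "p^m*q^n*a \<le> cc" using p0 q0
    by (metis mult_left_le order_trans zero_le_mult_iff zero_le_power less_imp_le)
  then show False using eq \<open>1 - cc \<le> a'\<close> cc by linarith
qed

lemma tf_pq: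
  assumes tf: "twofold_cantor p q" and a: "a \<in> AA" and a': "a' \<in> AA" and eq: "p^m*a = q^n*a'"
  shows "m = 0 \<and> n = 0"
proof (cases "m = 0")
  case True
  then have "q^n*a' = a" using eq by simp
  then have "p^0*q^n*a' = a" by simp
  from AA_scaled_not[OF a' a this] show ?thesis using True by simp
next
  case False
  show ?thesis
  proof (cases "n = 0")
    case True
    then have "p^m*q^0*a = a'" using eq by simp
    from AA_scaled_not[OF a a' this] True show ?thesis by simp
  next
    case n: False
    have "p^m*a \<in> (S1 p ^^ m) ` AA" using a unfolding S1_pow by (rule imageI)
    moreover have "q^n*a' \<in> (S2 q ^^ n) ` AA" using a' unfolding S2_pow by (rule imageI)
    ultimately have "p^m*a \<in> (S1 p ^^ m) ` AA \<inter> (S2 q ^^ n) ` AA" using eq by simp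
    moreover have "(S1 p ^^ m) ` AA \<inter> (S2 q ^^ n) ` AA = {}"
      using tf False n unfolding twofold_cantor_def by simp
    ultimately show ?thesis by blast
  qed
qed

lemma tf_inj:
  assumes tf: "twofold_cantor p q" and a: "a \<in> AA" and a': "a' \<in> AA"
    and eq: "p^i*q^j*a = p^k*q^l*a'"
  shows "i = k \<and> j = l"
proof -
  have pq0: "p^i*q^j \<noteq> 0" "p^k*q^l \<noteq> 0" "p^i*q^l \<noteq> 0" "p^k*q^j \<noteq> 0" using p0 q0 by auto
  consider "i \<le> k" "j \<le> l" | "i \<le> k" "l < j" | "k < i" "j \<le> l" | "k < i" "l < j" by linarith
  then show ?thesis
  proof cases
    case 1
    then obtain uu vv where uv: "k = i+uu" "l = j+vv" by (metis le_add_diff_inverse)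
    have "(p^i*q^j)*a = (p^i*q^j)*(p^uu*q^vv*a')" using eq uv by (simp add: power_add algebra_simps)
    then have "p^uu*q^vv*a' = a" using pq0 p0 q0 by simp
    then show ?thesis using AA_scaled_not[OF a' a] uv by simp
  next
    case 2
    then obtain uu vv where uv: "k = i+uu" "j = l+vv" by (metis le_add_diff_inverse less_imp_le)
    have "(p^i*q^l)*(q^vv*a) = (p^i*q^l)*(p^uu*a')" using eq uv by (simp add: power_add algebra_simps)
    then have "p^uu*a' = q^vv*a" using pq0 p0 q0 by simp
    from tf_pq[OF tf a' a this] have "uu = 0 \<and> vv = 0" .
    then show ?thesis using uv 2 by simp
  next
    case 3
    then obtain uu vv where uv: "i = k+uu" "l = j+vv" by (metis le_add_diff_inverse less_imp_le)
    have "(p^k*q^j)*(p^uu*a) = (p^k*q^j)*(q^vv*a')" using eq uv by (simp add: power_add algebra_simps)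
    then have "p^uu*a = q^vv*a'" using pq0 p0 q0 by simp
    from tf_pq[OF tf a a' this] have "uu = 0 \<and> vv = 0" .
    then show ?thesis using uv 3 by simp
  next
    case 4
    then obtain uu vv where uv: "i = k+uu" "j = l+vv" by (metis le_add_diff_inverse less_imp_le)
    have "(p^k*q^l)*(p^uu*q^vv*a) = (p^k*q^l)*a'" using eq uv by (simp add: power_add algebra_simps)
    then have "p^uu*q^vv*a = a'" using pq0 p0 q0 by simp
    then show ?thesis using AA_scaled_not[OF a a'] uv by simp
  qed
qed

lemma decomp:
  assumes "1 \<le> N" "x \<in> BB"
  shows "(\<exists>m n. 0 < m+n \<and> m+n < N \<and> x \<in> (\<lambda>y. p^m*q^n*y) ` AA) \<or> (\<exists>m n. m+n = N \<and> x \<in> (\<lambda>y. p^m*q^n*y) ` KK)"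
  using assms(1)
proof (induction N rule: dec_induct)
  case base
  from assms(2) obtain y where "y \<in> KK" "x = p*y \<or> x = q*y" unfolding BB_def by auto
  then have "x \<in> (\<lambda>y. p^1*q^0*y) ` KK \<or> x \<in> (\<lambda>y. p^0*q^1*y) ` KK" by auto
  then show ?case by (metis add.commute add_0 one_add_one)
next
  case (step N)
  from step.IH show ?case
  proof
    assume "\<exists>m n. 0 < m+n \<and> m+n < N \<and> x \<in> (\<lambda>y. p^m*q^n*y) ` AA"
    then show ?case by (metis less_SucI)
  next
    assume "\<exists>m n. m+n = N \<and> x \<in> (\<lambda>y. p^m*q^n*y) ` KK"
    then obtain m n y where mn: "m+n = N" "y \<in> KK" "x = p^m*q^n*y" by auto
    from mn(2) show ?case
    proof (cases rule: KK_cases)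
      case 1
      then have "x \<in> (\<lambda>y. p^m*q^n*y) ` AA" using mn by auto
      then show ?thesis using mn step.hyps by (metis less_Suc_eq_le le_refl order_less_le_trans zero_less_one)
    next
      case (2 z)
      then have "x = p^(Suc m)*q^n*z" using mn by simp
      then have "x \<in> (\<lambda>y. p^(Suc m)*q^n*y) ` KK" using 2 by auto
      then show ?thesis using mn by (metis add_Suc)
    next
      case (3 z)
      then have "x = p^m*q^(Suc n)*z" using mn by simp
      then have "x \<in> (\<lambda>y. p^m*q^(Suc n)*y) ` KK" using 3 by auto
      then show ?thesis using mn by (metis add_Suc_right)
    qed
  qed
qed

lemma ab_props: "0 < s \<Longrightarrow> 0 < p powr s \<and> p powr s < 1 \<and> 0 < q powr s \<and> q powr s < 1"
proof -
  assume s: "0 < s"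
  have "p powr s < 1 powr s" using s p0 p1 by (intro powr_less_mono2) auto
  moreover have "q powr s < 1 powr s" using s q0 q1 by (intro powr_less_mono2) auto
  ultimately show ?thesis using p0 q0 by simp
qed

lemma rpow: "(p^m*q^n) powr s = (p powr s)^m * (q powr s)^n"
  using p0 q0 by (simp add: powr_mult pow_powr)

lemma BB_unit: "BB \<subseteq> {0..1}" using BB_range cc by auto

lemma ub_step:
  assumes s: "0 < s" and d: "0 < \<delta>" and N: "1 \<le> N" and h: "hcov s \<delta> BB t"
  shows "hcov s \<delta> BB (((\<Sum>(m,n)\<in>{(m,n). 0<m+n \<and> m+n<N}. (p powr s)^m*(q powr s)^n)
              + 2*(\<Sum>(m,n)\<in>{(m,n). m+n=N}. (p powr s)^m*(q powr s)^n)) * t)"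
proof -
  define J1 where "J1 = {(m,n). 0<m+n \<and> m+n<N}"
  define J2 where "J2 = {(m::nat,n::nat). m+n=N}"
  have hA: "hcov s \<delta> AA t"
  proof -
    have "hcov s (\<bar>-1\<bar>*\<delta>) ((\<lambda>x. (-1)*x+1) ` BB) (\<bar>-1\<bar> powr s * t)"
      by (rule hcov_affine[OF s _ h]) simp
    moreover have "(\<lambda>x::real. (-1)*x+1) ` BB = AA" unfolding AA_refl by (rule image_cong) auto
    ultimately show ?thesis by simp
  qed
  have hK: "hcov s \<delta> KK (t+t)" using hcov_Un[OF hA h] KK_AB by simp
  have sc: "hcov s \<delta> ((\<lambda>y. p^m*q^n*y) ` X) ((p powr s)^m*(q powr s)^n * u)" if hX: "hcov s \<delta> X u" for X u m n
  proof -
    have r: "0 < p^m*q^n" using p0 q0 by simp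
    have r1: "p^m*q^n \<le> 1" using p0 p1 q0 q1 by (intro mult_le_one power_le_one) auto
    have "hcov s (\<bar>p^m*q^n\<bar>*\<delta>) ((\<lambda>x. (p^m*q^n)*x+0) ` X) (\<bar>p^m*q^n\<bar> powr s * u)"
      by (rule hcov_affine[OF s _ hX]) (use p0 q0 in simp)
    then have "hcov s (p^m*q^n*\<delta>) ((\<lambda>y. p^m*q^n*y) ` X) ((p powr s)^m*(q powr s)^n * u)"
      using r by (simp add: rpow)
    moreover have "p^m*q^n*\<delta> \<le> \<delta>" using r1 d by (simp add: mult_left_le_one_le)
    ultimately show ?thesis by (rule hcov_delta_mono[rotated])
  qed
  have U1: "hcov s \<delta> (\<Union>(m,n)\<in>J1. (\<lambda>y. p^m*q^n*y) ` AA) (\<Sum>(m,n)\<in>J1. (p powr s)^m*(q powr s)^n * t)"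
    using hcov_UN[OF finite_J1[of N], of s \<delta> "\<lambda>(m,n). (\<lambda>y. p^m*q^n*y) ` AA" "\<lambda>(m,n). (p powr s)^m*(q powr s)^n * t"]
      sc[OF hA] unfolding J1_def by (auto simp: case_prod_beta)
  have U2: "hcov s \<delta> (\<Union>(m,n)\<in>J2. (\<lambda>y. p^m*q^n*y) ` KK) (\<Sum>(m,n)\<in>J2. (p powr s)^m*(q powr s)^n * (t+t))"
    using hcov_UN[OF finite_J2[of N], of s \<delta> "\<lambda>(m,n). (\<lambda>y. p^m*q^n*y) ` KK" "\<lambda>(m,n). (p powr s)^m*(q powr s)^n * (t+t)"]
      sc[OF hK] unfolding J2_def by (auto simp: case_prod_beta)
  have sub: "BB \<subseteq> (\<Union>(m,n)\<in>J1. (\<lambda>y. p^m*q^n*y) ` AA) \<union> (\<Union>(m,n)\<in>J2. (\<lambda>y. p^m*q^n*y) ` KK)"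
  proof
    fix x assume "x \<in> BB"
    from decomp[OF N this] show "x \<in> (\<Union>(m,n)\<in>J1. (\<lambda>y. p^m*q^n*y) ` AA) \<union> (\<Union>(m,n)\<in>J2. (\<lambda>y. p^m*q^n*y) ` KK)"
      unfolding J1_def J2_def by blast
  qed
  have eq: "(\<Sum>(m,n)\<in>J1. (p powr s)^m*(q powr s)^n * t) + (\<Sum>(m,n)\<in>J2. (p powr s)^m*(q powr s)^n * (t+t))
     = ((\<Sum>(m,n)\<in>J1. (p powr s)^m*(q powr s)^n) + 2*(\<Sum>(m,n)\<in>J2. (p powr s)^m*(q powr s)^n)) * t"
    by (simp add: sum_distrib_left sum_distrib_right case_prod_beta algebra_simps)
  show ?thesis using hcov_mono[OF sub _ hcov_Un[OF U1 U2]] eq unfolding J1_def J2_def by simp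
qed

lemma ub_zero:
  assumes s: "0 < s" and g: "1/2 < (1 - p powr s)*(1 - q powr s)"
  shows "hausdorff_measure s KK = 0"
proof -
  define a where "a = p powr s"
  define b where "b = q powr s"
  have ab: "0 < a" "a < 1" "0 < b" "b < 1" using ab_props[OF s] by (auto simp: a_def b_def)
  define c1 where "c1 = 1/((1-a)*(1-b)) - 1"
  have gab: "1/2 < (1-a)*(1-b)" using g by (simp add: a_def b_def)
  have c1: "c1 < 1"
  proof -
    have "0 < (1-a)*(1-b)" using ab by simp
    then have "1/((1-a)*(1-b)) < 2" using gab by (simp add: divide_less_eq)
    then show ?thesis by (simp add: c1_def)
  qed
  define \<rho> where "\<rho> = max a b"
  have rho: "0 \<le> \<rho>" "\<rho> < 1" using ab by (auto simp: \<rho>_def)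
  have "eventually (\<lambda>N. 2*((real N+1)*\<rho>^N) < 1 - c1) sequentially"
  proof -
    have "(\<lambda>N. 2*((real N+1)*\<rho>^N)) \<longlonglongrightarrow> 2*0"
      by (rule tendsto_mult[OF tendsto_const n_pow_lim[OF rho]])
    then have "(\<lambda>N. 2*((real N+1)*\<rho>^N)) \<longlonglongrightarrow> 0" by simp
    then show ?thesis by (rule order_tendstoD(2)) (use c1 in simp)
  qed
  then obtain N0 where N0: "\<And>N. N \<ge> N0 \<Longrightarrow> 2*((real N+1)*\<rho>^N) < 1 - c1"
    by (auto simp: eventually_sequentially)
  define N where "N = max N0 1"
  have N: "1 \<le> N" "2*((real N+1)*\<rho>^N) < 1 - c1" using N0[of N] by (auto simp: N_def)
  define lam where "lam = (\<Sum>(m,n)\<in>{(m,n). 0<m+n \<and> m+n<N}. a^m*b^n) + 2*(\<Sum>(m,n)\<in>{(m,n). m+n=N}. a^m*b^n)"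
  have lam0: "0 \<le> lam" unfolding lam_def using ab by (intro add_nonneg_nonneg mult_nonneg_nonneg sum_nonneg) auto
  have "lam \<le> c1 + 2*((real N+1)*\<rho>^N)"
    unfolding lam_def c1_def using ab rho N(1)
    by (intro add_mono mult_left_mono J1_sum J2_sum) (auto simp: \<rho>_def)
  then have lam1: "lam < 1" using N(2) by linarith
  have iter: "hcov s \<delta> BB (lam^k * t)" if "0 < \<delta>" "hcov s \<delta> BB t" for \<delta> t k
  proof (induction k)
    case 0 then show ?case using that by simp
  next
    case (Suc k)
    from ub_step[OF s that(1) N(1) Suc.IH] show ?case by (simp add: lam_def a_def b_def mult.assoc)
  qed
  have pre0: "hausdorff_pre s \<delta> KK = 0" if d: "0 < \<delta>" for \<delta>
  proof -
    obtain j where j: "1/2^j < \<delta>"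
    proof -
      obtain j where "1/\<delta> < real j" using reals_Archimedean2 by blast
      moreover have "real j < 2^j" by (rule of_nat_less_two_power)
      ultimately have "1/\<delta> < 2^j" by linarith
      then have "1/2^j < \<delta>" using d by (simp add: divide_less_eq mult.commute)
      then show ?thesis by (rule that)
    qed
    define t0 where "t0 = (2 * (1/2) powr s)^j"
    have t0: "0 \<le> t0" by (simp add: t0_def)
    have "hcov s (1/2^j) {0..1} t0" unfolding t0_def by (rule hcov_unit[OF s])
    then have "hcov s \<delta> BB t0" using j BB_unit by (meson hcov_delta_mono hcov_mono less_imp_le order_refl)
    then have hk: "hcov s \<delta> KK (lam^k * t0 + lam^k * t0)" for k
    proof -
      assume hB: "hcov s \<delta> BB t0"
      have hB': "hcov s \<delta> BB (lam^k * t0)" by (rule iter[OF d hB])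
      have "hcov s (\<bar>-1\<bar>*\<delta>) ((\<lambda>x. (-1)*x+1) ` BB) (\<bar>-1\<bar> powr s * (lam^k * t0))"
        by (rule hcov_affine[OF s _ hB']) simp
      moreover have "(\<lambda>x::real. (-1)*x+1) ` BB = AA" unfolding AA_refl by (rule image_cong) auto
      ultimately have "hcov s \<delta> AA (lam^k * t0)" by simp
      from hcov_Un[OF this hB'] show ?thesis using KK_AB by simp
    qed
    have "hausdorff_pre s \<delta> KK \<le> 0"
    proof (rule ennreal_le_epsilon)
      fix e :: real assume e: "0 < e"
      have "(\<lambda>k. 2*t0*lam^k) \<longlonglongrightarrow> 2*t0*0"
        using lam0 lam1 by (intro tendsto_mult tendsto_const LIMSEQ_power_zero) auto
      then have "eventually (\<lambda>k. 2*t0*lam^k < e) sequentially"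
        using e by (intro order_tendstoD(2)) auto
      then obtain k where k: "2*t0*lam^k < e" by (auto dest: eventually_happens)
      have "hausdorff_pre s \<delta> KK \<le> ennreal (lam^k * t0 + lam^k * t0)" by (rule hcov_pre[OF d hk])
      also have "\<dots> \<le> ennreal e" using k by (intro ennreal_leI) (simp add: algebra_simps)
      finally show "hausdorff_pre s \<delta> KK \<le> 0 + ennreal e" by simp
    qed
    then show ?thesis by simp
  qed
  show ?thesis unfolding hausdorff_measure_def using pre0 by simp
qed

lemma lb_pos:
  assumes tf: "twofold_cantor p q" and s: "0 < s" and g: "(1 - p powr s)*(1 - q powr s) < 1/2"
  shows "hausdorff_measure s KK \<noteq> 0"
proof -
  define a where "a = p powr s"
  define b where "b = q powr s"
  have ab: "0 < a" "a < 1" "0 < b" "b < 1" using ab_props[OF s] by (auto simp: a_def b_def)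
  have gab: "(1-a)*(1-b) < 1/2" using g by (simp add: a_def b_def)
  have pos: "0 < (1-a)*(1-b)" using ab by simp
  have lim: "(\<lambda>N. (\<Sum>m<N. a^m)*(\<Sum>n<N. b^n)) \<longlonglongrightarrow> (1/(1-a))*(1/(1-b))"
  proof (rule tendsto_mult)
    show "(\<lambda>N. \<Sum>m<N. a^m) \<longlonglongrightarrow> 1/(1-a)" using geometric_sums[of a] ab by (simp add: sums_def)
    show "(\<lambda>N. \<Sum>m<N. b^m) \<longlonglongrightarrow> 1/(1-b)" using geometric_sums[of b] ab by (simp add: sums_def)
  qed
  have "2 < (1/(1-a))*(1/(1-b))"
  proof -
    have "2 * ((1-a)*(1-b)) < 1" using gab by linarith
    then show ?thesis using pos by (simp add: field_simps)
  qed
  then have "eventually (\<lambda>N. 2 < (\<Sum>m<N. a^m)*(\<Sum>n<N. b^n)) sequentially"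
    by (rule order_tendstoD(1)[OF lim])
  then obtain N0 where N0: "\<And>N. N \<ge> N0 \<Longrightarrow> 2 < (\<Sum>m<N. a^m)*(\<Sum>n<N. b^n)"
    by (auto simp: eventually_sequentially)
  define N where "N = max N0 2"
  have N: "2 \<le> N" "2 < (\<Sum>m<N. a^m)*(\<Sum>n<N. b^n)" using N0[of N] by (auto simp: N_def)
  define I where "I = {..<N}\<times>{..<N} - {(0::nat,0::nat)}"
  have I: "finite I" by (simp add: I_def)
  have two: "\<exists>i\<in>I. \<exists>j\<in>I. i \<noteq> j" using N(1) by (intro bexI[of _ "(1,0)"] bexI[of _ "(0,1)"]) (auto simp: I_def)
  define P where "P = (\<lambda>(m,n). (\<lambda>y. p^m*q^n*y) ` AA)"
  define af where "af = (\<lambda>(m::nat,n::nat). -(1/(p^m*q^n)))"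
  define bf where "bf = (\<lambda>i::nat\<times>nat. 1::real)"
  have af: "\<forall>i\<in>I. af i \<noteq> 0" using p0 q0 by (auto simp: af_def)
  have sum: "1 \<le> (\<Sum>i\<in>I. (1/\<bar>af i\<bar>) powr s)"
  proof -
    have "(\<Sum>i\<in>I. (1/\<bar>af i\<bar>) powr s) = (\<Sum>(m,n)\<in>I. a^m*b^n)"
      using p0 q0 by (intro sum.cong refl) (auto simp: af_def rpow a_def b_def)
    also have "\<dots> = (\<Sum>(m,n)\<in>{..<N}\<times>{..<N}. a^m*b^n) - 1"
      unfolding I_def using N(1) by (subst sum_diff1) auto
    also have "\<dots> = (\<Sum>m<N. a^m)*(\<Sum>n<N. b^n) - 1" by (simp add: prod_sum)
    finally show ?thesis using N(2) by simp
  qed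
  have PB: "\<forall>i\<in>I. P i \<subseteq> BB \<and> P i \<noteq> {}"
  proof
    fix i assume iI: "i \<in> I"
    obtain m n where i: "i = (m,n)" by (cases i)
    have mn: "(m,n) \<noteq> (0,0)" using iI i by (simp add: I_def)
    have "P i \<subseteq> BB"
    proof
      fix x assume "x \<in> P i"
      then obtain y where "y \<in> AA" "x = p^m*q^n*y" unfolding P_def i by auto
      then show "x \<in> BB" using scaled_in_BB[OF _ mn] AA_sub by auto
    qed
    moreover have "P i \<noteq> {}" using AA_ne unfolding P_def i by auto
    ultimately show "P i \<subseteq> BB \<and> P i \<noteq> {}" by simp
  qed
  have h: "\<forall>i\<in>I. (\<lambda>x. af i * x + bf i) ` P i = BB"
  proof
    fix i assume "i \<in> I"
    obtain m n where i: "i = (m,n)" by (cases i)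
    have r: "p^m*q^n \<noteq> 0" using p0 q0 by simp
    have "(\<lambda>x. af i * x + bf i) ` P i = (\<lambda>y. -(1/(p^m*q^n))*(p^m*q^n*y) + 1) ` AA"
      by (simp only: P_def af_def bf_def i prod.case image_image)
    also have "\<dots> = (\<lambda>y. 1 - y) ` AA" by (rule image_cong[OF refl]) (use r in simp)
    finally have "(\<lambda>x. af i * x + bf i) ` P i = (\<lambda>y. 1 - y) ` AA" .
    then show "(\<lambda>x. af i * x + bf i) ` P i = BB" using BB_refl by simp
  qed
  have compP: "compact (P i)" for i
    unfolding P_def using compact_AA by (cases i) (auto intro!: compact_continuous_image continuous_intros)
  have disj: "P i \<inter> P j = {}" if "i \<noteq> j" for i j
  proof -
    obtain m n k l where ij: "i = (m,n)" "j = (k,l)" by (cases i, cases j)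
    show ?thesis
    proof (rule ccontr)
      assume "P i \<inter> P j \<noteq> {}"
      then obtain y y' where "y \<in> AA" "y' \<in> AA" "p^m*q^n*y = p^k*q^l*y'"
        unfolding P_def ij by auto
      from tf_inj[OF tf this] show False using that ij by simp
    qed
  qed
  have "\<exists>d>0. \<forall>ij\<in>{ij\<in>I\<times>I. fst ij \<noteq> snd ij}. \<forall>x\<in>P (fst ij). \<forall>y\<in>P (snd ij). d \<le> \<bar>x - y\<bar>"
  proof (rule finite_min_pos)
    show "finite {ij\<in>I\<times>I. fst ij \<noteq> snd ij}" using I by simp
    show "\<forall>ij\<in>{ij\<in>I\<times>I. fst ij \<noteq> snd ij}. \<exists>d>0. \<forall>x\<in>P (fst ij). \<forall>y\<in>P (snd ij). d \<le> \<bar>x - y\<bar>"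
    proof
      fix ij assume "ij \<in> {ij\<in>I\<times>I. fst ij \<noteq> snd ij}"
      then have "fst ij \<noteq> snd ij" by simp
      from separate_compact_closed[OF compP compact_imp_closed[OF compP] disj[OF this]]
      show "\<exists>d>0. \<forall>x\<in>P (fst ij). \<forall>y\<in>P (snd ij). d \<le> \<bar>x - y\<bar>" by (simp add: dist_real_def)
    qed
  qed force
  then obtain \<delta>0 where d0: "0 < \<delta>0" and gap0: "\<forall>ij\<in>{ij\<in>I\<times>I. fst ij \<noteq> snd ij}. \<forall>x\<in>P (fst ij). \<forall>y\<in>P (snd ij). \<delta>0 \<le> \<bar>x - y\<bar>"
    by blast
  have gap: "\<forall>i\<in>I. \<forall>j\<in>I. i \<noteq> j \<longrightarrow> (\<forall>x\<in>P i. \<forall>y\<in>P j. \<delta>0 \<le> \<bar>x - y\<bar>)"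
  proof (intro ballI impI)
    fix i j x y assume "i \<in> I" "j \<in> I" "i \<noteq> j" "x \<in> P i" "y \<in> P j"
    then have "(i,j) \<in> {ij\<in>I\<times>I. fst ij \<noteq> snd ij}" by simp
    from gap0[rule_format, OF this] show "\<delta>0 \<le> \<bar>x - y\<bar>" using \<open>x \<in> P i\<close> \<open>y \<in> P j\<close> by simp
  qed
  note LB = lb_finite[OF s I two af sum PB h d0 gap]
  have fin_lb: "\<delta>0 powr s \<le> (\<Sum>U\<in>\<U>. hweight s U)"
    if "finite \<U>" "\<forall>U\<in>\<U>. bounded U" "BB \<subseteq> \<Union>\<U>" for \<U>
    using LB[of "card \<U>"] that by blast
  have cov_lb: "ennreal (\<delta>0 powr s / 2 powr s) \<le> (\<Sum>i. ennreal (hweight s (U i)))"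
    if "KK \<subseteq> (\<Union>i. U i)" "\<forall>i. bounded (U i) \<and> diameter (U i) \<le> 1" for U
    by (rule lb_countable[OF fin_lb s compact_BB]) (use that BB_sub in auto)
  have "ennreal (\<delta>0 powr s / 2 powr s) \<le> hausdorff_pre s 1 KK"
    unfolding hausdorff_pre_def by (rule INF_greatest) (use cov_lb in auto)
  also have "\<dots> \<le> hausdorff_measure s KK"
    unfolding hausdorff_measure_def by (rule SUP_upper) auto
  finally have "ennreal (\<delta>0 powr s / 2 powr s) \<le> hausdorff_measure s KK" .
  moreover have "0 < \<delta>0 powr s / 2 powr s" using d0 by simp
  ultimately show ?thesis by (metis ennreal_eq_0_iff le_zero_eq not_less)
qed

lemma h0_pos: "hausdorff_measure 0 KK \<noteq> 0"
proof -
  have cov1: "1 \<le> (\<Sum>i. ennreal (hweight 0 (U i)))" if cov: "KK \<subseteq> (\<Union>i. U i)" for U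
  proof -
    obtain x where "x \<in> KK" using KK_props(2) by auto
    then obtain i where i: "x \<in> U i" using cov by auto
    then have "hweight 0 (U i) = 1" by (auto simp: hweight_def)
    then have "(\<Sum>j\<in>{i}. ennreal (hweight 0 (U j))) = 1" by simp
    moreover have "(\<Sum>j\<in>{i}. ennreal (hweight 0 (U j))) \<le> (\<Sum>j. ennreal (hweight 0 (U j)))"
      by (intro sum_le_suminf) auto
    ultimately show ?thesis by simp
  qed
  have "1 \<le> hausdorff_pre 0 1 KK"
    unfolding hausdorff_pre_def by (rule INF_greatest) (use cov1 in auto)
  also have "\<dots> \<le> hausdorff_measure 0 KK"
    unfolding hausdorff_measure_def by (rule SUP_upper) auto
  finally show ?thesis by auto
qed

end

theorem theorem4:
  fixes p q :: real
  assumes "0 < p" "p < 1/2" "0 < q" "q < 1/2"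
    and "twofold_cantor p q"
  shows "p powr (hausdorff_dim (Kpq p q)) + q powr (hausdorff_dim (Kpq p q))
           - (p * q) powr (hausdorff_dim (Kpq p q)) = 1/2"
proof -
  interpret pq p q using assms by unfold_locales
  note tf = assms(5)
  define g where "g s = (1 - p powr s)*(1 - q powr s)" for s
  have g0: "g 0 = 0" using assms by (simp add: g_def)
  have g2: "1/2 \<le> g 2"
  proof -
    have pq2: "p powr 2 = p^2" "q powr 2 = q^2"
      using powr_realpow[of p 2] powr_realpow[of q 2] assms by simp_all
    have "p*p \<le> (1/2)*(1/2)" "q*q \<le> (1/2)*(1/2)" using assms by (intro mult_mono; simp)+
    then have "p^2 \<le> 1/4" "q^2 \<le> 1/4" by (simp_all add: power2_eq_square)
    with pq2 have "3/4 \<le> 1 - p powr 2" "3/4 \<le> 1 - q powr 2" by auto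
    then have "(3/4)*(3/4) \<le> (1 - p powr 2)*(1 - q powr 2)" by (intro mult_mono) auto
    then show ?thesis by (simp add: g_def)
  qed
  have cont: "continuous_on {0..2} g" unfolding g_def using assms by (intro continuous_intros) auto
  obtain d where d: "0 \<le> d" "d \<le> 2" "g d = 1/2" using IVT'[of g 0 "1/2" 2, OF _ g2 _ cont] g0 by auto
  have dpos: "0 < d" using d g0 by (cases "d = 0") auto
  have gmono: "g s < g t" if st: "0 \<le> s" "s < t" for s t
  proof -
    have "p powr t < p powr s" using assms st by (intro powr_less_mono') auto
    moreover have "q powr t < q powr s" using assms st by (intro powr_less_mono') auto
    moreover have "p powr s \<le> 1" "q powr s \<le> 1" using assms st by (intro powr_le1; simp)+
    ultimately show ?thesis unfolding g_def by (intro mult_strict_mono) auto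
  qed
  define Z where "Z = {s. 0 \<le> s \<and> hausdorff_measure s KK = 0}"
  have Zup: "s \<in> Z" if "d < s" for s
  proof -
    have "1/2 < g s" using gmono[of d s] d that by simp
    then have "hausdorff_measure s KK = 0" using ub_zero[of s] that dpos by (simp add: g_def)
    then show ?thesis using that dpos by (simp add: Z_def)
  qed
  have Zlow: "d \<le> s" if "s \<in> Z" for s
  proof (rule ccontr)
    assume "\<not> d \<le> s"
    then have sd: "s < d" by simp
    have s0: "0 \<le> s" "hausdorff_measure s KK = 0" using that by (auto simp: Z_def)
    show False
    proof (cases "s = 0")
      case True then show False using h0_pos s0 by simp
    next
      case False
      then have "0 < s" using s0 by simp
      moreover have "g s < 1/2" using gmono[OF s0(1) sd] d by simp
      ultimately show False using lb_pos[OF tf] s0 by (simp add: g_def)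
    qed
  qed
  have dim: "hausdorff_dim KK = d"
  proof -
    have ne: "Z \<noteq> {}" using Zup[of "d+1"] by auto
    have bdd: "bdd_below Z" by (rule bdd_belowI[of _ d]) (rule Zlow)
    have "d \<le> Inf Z" by (rule cInf_greatest[OF ne]) (rule Zlow)
    moreover have "Inf Z \<le> d"
    proof (rule ccontr)
      assume "\<not> Inf Z \<le> d"
      then have "d < Inf Z" by simp
      then have "d < (d + Inf Z)/2" "(d + Inf Z)/2 < Inf Z" by auto
      then have h: "d < (d + Inf Z)/2" "(d + Inf Z)/2 < Inf Z" by auto
      have "Inf Z \<le> (d + Inf Z)/2" by (rule cInf_lower[OF Zup[OF h(1)] bdd])
      then show False using h(2) by simp
    qed
    ultimately show ?thesis unfolding hausdorff_dim_def Z_def by simp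
  qed
  have "p powr d + q powr d - (p*q) powr d = 1 - g d" by (simp add: g_def powr_mult algebra_simps)
  then show ?thesis using dim d by simp
qed

end
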